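(* Let $N$ be a finite set with $|N|\geq 2$. An inequality $\langle o,\eta\rangle\le u$ for $\eta\in P_N$, where $o\in\mathbb{R}^{\Upsilon}$ and $u\in\mathbb{R}$, is facet-defining for $P_N$ and tight at all full graphs over $N$ (i.e. $\langle o,\eta_H\rangle=u$ for every full graph $H$) if and only if there exists an extreme standardized supermodular set function $m:\mathcal{P}(N)\to\mathbb{R}$ such that $o(a|B)=m(\{a\}\cup B)-m(B)$ for all $(a|B)\in\Upsilon$ and $u$ is the common value of $\langle o,\eta_H\rangle$ over full graphs $H$ over $N$.
   Context: $\mathrm{DAG}(N)$ is the set of acyclic directed graphs over $N$; $\mathrm{pa}_G(a)$ is the parent set of $a$ in $G$. A full graph is an acyclic directed graph over $N$ in which every pair of distinct nodes is adjacent. $\Upsilon=\{(a|B): a\in N,\ \emptyset\neq B\subseteq N\setminus\{a\}\}$; for $G\in\mathrm{DAG}(N)$, $\eta_G\in\mathbb{R}^{\Upsilon}$ has $\eta_G(a|B)=1$ if $B=\mathrm{pa}_G(a)$ and $0$ otherwise; $P_N=\mathrm{conv}\{\eta_G:G\in\mathrm{DAG}(N)\}$ is the family-variable polytope. A set function $m:\mathcal{P}(N)\to\mathbb{R}$ is standardized if $m(S)=0$ whenever $|S|\le 1$, and supermodular if $m(U)+m(V)\le m(U\cup V)+m(U\cap V)$ for all $U,V\subseteq N$. The standardized supermodular functions form a pointed polyhedral cone; $m$ is extreme if it generates an extreme ray of this cone. *)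

theory Defs
  imports Complex_Main
begin

(* Acyclic directed graphs over N, represented as edge relations G \<subseteq> N \<times> N
   ((b,a) \<in> G means an arrow b \<rightarrow> a). *)
definition DAGs :: "'a set \<Rightarrow> ('a \<times> 'a) set set" where
  "DAGs N = {G. G \<subseteq> N \<times> N \<and> acyclic G}"

definition pa :: "('a \<times> 'a) set \<Rightarrow> 'a \<Rightarrow> 'a set" where
  "pa G a = {b. (b, a) \<in> G}"

definition full_graph :: "'a set \<Rightarrow> ('a \<times> 'a) set \<Rightarrow> bool" where
  "full_graph N G \<longleftrightarrow> G \<in> DAGs N \<and>
     (\<forall>a\<in>N. \<forall>b\<in>N. a \<noteq> b \<longrightarrow> (a, b) \<in> G \<or> (b, a) \<in> G)"

definition Ups :: "'a set \<Rightarrow> ('a \<times> 'a set) set" where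
  "Ups N = {(a, B). a \<in> N \<and> B \<noteq> {} \<and> B \<subseteq> N - {a}}"

(* Vectors in R^Upsilon are functions; only the values on Ups N matter. *)
type_synonym 'a vecU = "'a \<times> 'a set \<Rightarrow> real"

definition inprod :: "'a set \<Rightarrow> 'a vecU \<Rightarrow> 'a vecU \<Rightarrow> real" where
  "inprod N x y = (\<Sum>p\<in>Ups N. x p * y p)"

definition eta :: "'a set \<Rightarrow> ('a \<times> 'a) set \<Rightarrow> 'a vecU" where
  "eta N G = (\<lambda>(a, B). if (a, B) \<in> Ups N \<and> B = pa G a then 1 else 0)"

definition famPoly :: "'a set \<Rightarrow> 'a vecU set" where
  "famPoly N = {x. \<exists>l :: ('a \<times> 'a) set \<Rightarrow> real.
      (\<forall>G\<in>DAGs N. 0 \<le> l G) \<and> (\<Sum>G\<in>DAGs N. l G) = 1 \<and>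
      x = (\<lambda>p. \<Sum>G\<in>DAGs N. l G * eta N G p)}"

definition aff_indep :: "'a vecU set \<Rightarrow> bool" where
  "aff_indep T \<longleftrightarrow> finite T \<and>
     (\<forall>c :: 'a vecU \<Rightarrow> real. (\<Sum>t\<in>T. c t) = 0 \<and> (\<forall>p. (\<Sum>t\<in>T. c t * t p) = 0)
        \<longrightarrow> (\<forall>t\<in>T. c t = 0))"

definition affdim :: "'a vecU set \<Rightarrow> int" where
  "affdim S = (if S = {} then -1
     else int (GREATEST k. \<exists>T. T \<subseteq> S \<and> aff_indep T \<and> card T = k) - 1)"

definition facet_defining :: "'a set \<Rightarrow> 'a vecU \<Rightarrow> real \<Rightarrow> bool" where
  "facet_defining N ob u \<longleftrightarrow>
     (\<forall>x\<in>famPoly N. inprod N ob x \<le> u) \<and>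
     affdim {x\<in>famPoly N. inprod N ob x = u} = affdim (famPoly N) - 1"

definition standardized :: "'a set \<Rightarrow> ('a set \<Rightarrow> real) \<Rightarrow> bool" where
  "standardized N m \<longleftrightarrow> (\<forall>S\<subseteq>N. card S \<le> 1 \<longrightarrow> m S = 0)"

definition supermodular :: "'a set \<Rightarrow> ('a set \<Rightarrow> real) \<Rightarrow> bool" where
  "supermodular N m \<longleftrightarrow>
     (\<forall>U\<subseteq>N. \<forall>V\<subseteq>N. m U + m V \<le> m (U \<union> V) + m (U \<inter> V))"

definition std_supermod :: "'a set \<Rightarrow> ('a set \<Rightarrow> real) \<Rightarrow> bool" where
  "std_supermod N m \<longleftrightarrow> standardized N m \<and> supermodular N m"

(* m generates an extreme ray of the cone of standardized supermodular functions on P(N) *)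
definition extreme_ssm :: "'a set \<Rightarrow> ('a set \<Rightarrow> real) \<Rightarrow> bool" where
  "extreme_ssm N m \<longleftrightarrow> std_supermod N m \<and> (\<exists>S\<subseteq>N. m S \<noteq> 0) \<and>
     (\<forall>m1 m2. std_supermod N m1 \<and> std_supermod N m2 \<and> (\<forall>S\<subseteq>N. m S = m1 S + m2 S)
        \<longrightarrow> (\<exists>c\<ge>0. \<forall>S\<subseteq>N. m1 S = c * m S))"

end

theory Submission
  imports Defs
begin


lemma hom_system:
  fixes R :: "('j \<Rightarrow> real) set"
  assumes "finite R" "finite D" "card R < card D"
  shows "\<exists>x. (\<exists>j\<in>D. x j \<noteq> 0) \<and> (\<forall>r\<in>R. (\<Sum>j\<in>D. r j * x j) = 0)"
  using assms
proof (induction "card R" arbitrary: R D rule: less_induct)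
  case less
  show ?case
  proof (cases "R = {}")
    case True
    from less.prems have "D \<noteq> {}" by auto
    then obtain j where "j \<in> D" by auto
    then show ?thesis using True by (intro exI[of _ "\<lambda>_. 1"]) auto
  next
    case False
    then obtain r where r: "r \<in> R" by auto
    define R0 where "R0 = R - {r}"
    have cR0: "card R0 < card R" using r less.prems unfolding R0_def
      by (intro card_Diff1_less) auto
    have fR0: "finite R0" using less.prems unfolding R0_def by auto
    show ?thesis
    proof (cases "\<forall>j\<in>D. r j = 0")
      case True
      from less.hyps[OF cR0 fR0 less.prems(2)] cR0 less.prems(3)
      obtain x where x: "\<exists>j\<in>D. x j \<noteq> 0" "\<forall>r\<in>R0. (\<Sum>j\<in>D. r j * x j) = 0" by force
      have "\<forall>r'\<in>R. (\<Sum>j\<in>D. r' j * x j) = 0"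
        using x(2) True unfolding R0_def by auto
      with x(1) show ?thesis by blast
    next
      case False
      then obtain j0 where j0: "j0 \<in> D" "r j0 \<noteq> 0" by auto
      define D' where "D' = D - {j0}"
      define tr where "tr = (\<lambda>r' :: 'j \<Rightarrow> real. \<lambda>j. r' j - r' j0 * r j / r j0)"
      define R' where "R' = tr ` R0"
      have cR': "card R' \<le> card R0" unfolding R'_def by (rule card_image_le[OF fR0])
      have cD': "card D' = card D - 1" unfolding D'_def using j0 less.prems by simp
      have "card R0 = card R - 1" unfolding R0_def using r less.prems by simp
      hence lt: "card R' < card D'" using cR' cD' less.prems(3) cR0 by linarith
      have fR': "finite R'" unfolding R'_def using fR0 by auto
      have fD': "finite D'" unfolding D'_def using less.prems by auto
      from less.hyps[OF _ fR' fD' lt] cR' cR0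
      obtain x' where x': "\<exists>j\<in>D'. x' j \<noteq> 0" "\<forall>r\<in>R'. (\<Sum>j\<in>D'. r j * x' j) = 0" by force
      define v where "v = - (\<Sum>j\<in>D'. r j * x' j) / r j0"
      define x where "x = x'(j0 := v)"
      have sD: "(\<Sum>j\<in>D. q j * x j) = q j0 * v + (\<Sum>j\<in>D'. q j * x' j)" for q
      proof -
        have "(\<Sum>j\<in>D. q j * x j) = q j0 * x j0 + (\<Sum>j\<in>D'. q j * x j)"
          unfolding D'_def using j0 less.prems by (simp add: sum.remove)
        also have "(\<Sum>j\<in>D'. q j * x j) = (\<Sum>j\<in>D'. q j * x' j)"
          unfolding x_def D'_def by (intro sum.cong) auto
        finally show ?thesis unfolding x_def by simp
      qed
      have "\<forall>q\<in>R. (\<Sum>j\<in>D. q j * x j) = 0"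
      proof
        fix q assume q: "q \<in> R"
        show "(\<Sum>j\<in>D. q j * x j) = 0"
        proof (cases "q = r")
          case True
          then show ?thesis using sD[of r] j0 unfolding v_def by (simp add: field_simps)
        next
          case False
          hence "tr q \<in> R'" unfolding R'_def R0_def using q by auto
          hence "(\<Sum>j\<in>D'. tr q j * x' j) = 0" using x'(2) by blast
          moreover have "(\<Sum>j\<in>D'. tr q j * x' j) = (\<Sum>j\<in>D'. q j * x' j) - q j0 / r j0 * (\<Sum>j\<in>D'. r j * x' j)"
            unfolding tr_def by (simp add: sum_subtractf sum_distrib_left algebra_simps)
          ultimately show ?thesis using sD[of q] j0 unfolding v_def by (simp add: field_simps)
        qed
      qed
      moreover have "\<exists>j\<in>D. x j \<noteq> 0" using x'(1) unfolding x_def D'_def by auto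
      ultimately show ?thesis by blast
    qed
  qed
qed


lemma aff_bound:
  fixes T :: "'a vecU set"
  assumes "aff_indep T" "finite D" "\<forall>t\<in>T. \<forall>p. p \<notin> D \<longrightarrow> t p = 0"
  shows "card T \<le> card D + 1"
proof (rule ccontr)
  assume "\<not> ?thesis"
  hence lt: "card D + 1 < card T" by simp
  have fT: "finite T" using assms(1) unfolding aff_indep_def by auto
  define R where "R = insert (\<lambda>t. 1) ((\<lambda>p. \<lambda>t::'a vecU. t p) ` D)"
  have "card R \<le> Suc (card ((\<lambda>p. \<lambda>t::'a vecU. t p) ` D))" unfolding R_def
    using assms(2) by (simp add: card_insert_if)
  also have "\<dots> \<le> Suc (card D)" using card_image_le[OF assms(2)] by simp
  finally have "card R \<le> card D + 1" by simp
  hence "card R < card T" using lt by linarith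
  moreover have "finite R" unfolding R_def using assms(2) by auto
  ultimately obtain c where c: "\<exists>t\<in>T. c t \<noteq> 0" "\<forall>r\<in>R. (\<Sum>t\<in>T. r t * c t) = 0"
    using hom_system[OF _ fT] by blast
  have "(\<Sum>t\<in>T. c t) = 0" using c(2) unfolding R_def by auto
  moreover have "\<forall>p. (\<Sum>t\<in>T. c t * t p) = 0"
  proof
    fix p show "(\<Sum>t\<in>T. c t * t p) = 0"
    proof (cases "p \<in> D")
      case True
      then show ?thesis using c(2) unfolding R_def by (auto simp: mult.commute)
    next
      case False
      then have "\<forall>t\<in>T. t p = 0" using assms(3) by blast
      then show ?thesis by (intro sum.neutral) simp
    qed
  qed
  ultimately have "\<forall>t\<in>T. c t = 0" using assms(1) unfolding aff_indep_def by blast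
  with c(1) show False by blast
qed

lemma li_bound:
  fixes W :: "('j \<Rightarrow> real) set"
  assumes "finite W" "finite D"
    "\<And>c. (\<forall>j\<in>D. (\<Sum>w\<in>W. c w * w j) = 0) \<Longrightarrow> \<forall>w\<in>W. c w = 0"
  shows "card W \<le> card D"
proof (rule ccontr)
  assume "\<not> ?thesis"
  hence lt: "card D < card W" by simp
  define R where "R = (\<lambda>j. \<lambda>w::'j \<Rightarrow> real. w j) ` D"
  have "card R \<le> card D" unfolding R_def using assms(2) by (rule card_image_le)
  hence "card R < card W" using lt by linarith
  moreover have "finite R" unfolding R_def using assms(2) by auto
  ultimately obtain c where c: "\<exists>w\<in>W. c w \<noteq> 0" "\<forall>r\<in>R. (\<Sum>w\<in>W. r w * c w) = 0"
    using hom_system[OF _ assms(1)] by blast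
  have "\<forall>j\<in>D. (\<Sum>w\<in>W. c w * w j) = 0" using c(2) unfolding R_def by (auto simp: mult.commute)
  with assms(3) c(1) show False by blast
qed

definition lift :: "'a vecU \<Rightarrow> ('a \<times> 'a set) option \<Rightarrow> real" where
  "lift y j = (case j of None \<Rightarrow> 1 | Some p \<Rightarrow> y p)"

definition Dp :: "('a \<times> 'a set) set \<Rightarrow> ('a \<times> 'a set) option set" where
  "Dp D = insert None (Some ` D)"

lemma sum_Dp:
  assumes "finite D"
  shows "(\<Sum>j\<in>Dp D. f j) = f None + (\<Sum>p\<in>D. f (Some p))"
  unfolding Dp_def using assms by (simp add: sum.reindex)

lemma card_Dp: "finite D \<Longrightarrow> card (Dp D) = card D + 1"
  unfolding Dp_def by (simp add: card_image)

lemma span_lemma: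
  fixes Q :: "'a vecU set"
  assumes "aff_indep Q" "finite D" "\<forall>t\<in>Q. \<forall>p. p \<notin> D \<longrightarrow> t p = 0"
    "card Q = card D + 1"
    "\<forall>q\<in>Q. (\<Sum>j\<in>Dp D. z j * lift q j) = 0"
  shows "\<forall>j\<in>Dp D. z j = 0"
proof (rule ccontr)
  assume nz: "\<not> ?thesis"
  have fQ: "finite Q" using assms(1) unfolding aff_indep_def by auto
  have fDp: "finite (Dp D)" unfolding Dp_def using assms(2) by auto
  have inj: "inj_on lift Q"
  proof (rule inj_onI)
    fix x y assume xy: "x \<in> Q" "y \<in> Q" "lift x = lift y"
    show "x = y"
    proof
      fix p show "x p = y p"
      proof (cases "p \<in> D")
        case True
        have "lift x (Some p) = lift y (Some p)" using xy(3) by simp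
        then show ?thesis unfolding lift_def by simp
      next
        case False
        then show ?thesis using xy(1,2) assms(3) by metis
      qed
    qed
  qed
  define W where "W = lift ` Q"
  have cW: "card W = card D + 1" unfolding W_def using card_image[OF inj] assms(4) by simp
  have pos: "(\<Sum>j\<in>Dp D. z j * z j) > 0"
  proof -
    obtain j where j: "j \<in> Dp D" "z j \<noteq> 0" using nz by blast
    have "(\<Sum>j\<in>Dp D. z j * z j) \<ge> z j * z j"
      using j fDp by (intro member_le_sum) auto
    moreover have "z j * z j > 0" using j not_real_square_gt_zero by blast
    ultimately show ?thesis by linarith
  qed
  have orth: "\<forall>w\<in>W. (\<Sum>j\<in>Dp D. z j * w j) = 0" using assms(5) unfolding W_def by auto
  have zW: "z \<notin> W" using orth pos by force
  have "card (insert z W) \<le> card (Dp D)"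
  proof (rule li_bound)
    show "finite (insert z W)" unfolding W_def using fQ by auto
    show "finite (Dp D)" by fact
    fix c assume c: "\<forall>j\<in>Dp D. (\<Sum>w\<in>insert z W. c w * w j) = 0"
    have fW: "finite W" unfolding W_def using fQ by auto
    have ce: "\<forall>j\<in>Dp D. c z * z j + (\<Sum>w\<in>W. c w * w j) = 0" using c zW fW by simp
    have "0 = (\<Sum>j\<in>Dp D. z j * (c z * z j + (\<Sum>w\<in>W. c w * w j)))" using ce by simp
    also have "\<dots> = c z * (\<Sum>j\<in>Dp D. z j * z j) + (\<Sum>w\<in>W. c w * (\<Sum>j\<in>Dp D. z j * w j))"
      by (simp add: sum.distrib sum_distrib_left sum_distrib_right algebra_simps sum.swap[of _ W])
    also have "(\<Sum>w\<in>W. c w * (\<Sum>j\<in>Dp D. z j * w j)) = 0" using orth by simp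
    finally have "c z = 0" using pos by simp
    hence cw: "\<forall>j\<in>Dp D. (\<Sum>w\<in>W. c w * w j) = 0" using ce by simp
    have re: "(\<Sum>w\<in>W. c w * w j) = (\<Sum>q\<in>Q. c (lift q) * lift q j)" for j
      unfolding W_def by (simp add: sum.reindex[OF inj])
    have "\<forall>q\<in>Q. c (lift q) = 0"
    proof -
      have "(\<Sum>q\<in>Q. c (lift q)) = 0" using cw re[of None] unfolding Dp_def lift_def by simp
      moreover have "\<forall>p. (\<Sum>q\<in>Q. c (lift q) * q p) = 0"
      proof
        fix p show "(\<Sum>q\<in>Q. c (lift q) * q p) = 0"
        proof (cases "p \<in> D")
          case True
          then show ?thesis using cw re[of "Some p"] unfolding Dp_def lift_def by simp
        next
          case False then have "\<forall>t\<in>Q. t p = 0" using assms(3) by blast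
          then show ?thesis by (intro sum.neutral) simp
        qed
      qed
      ultimately show ?thesis using assms(1) unfolding aff_indep_def by blast
    qed
    then show "\<forall>w\<in>insert z W. c w = 0" using \<open>c z = 0\<close> unfolding W_def by auto
  qed
  moreover have "card (insert z W) = card D + 2" using zW cW fQ unfolding W_def by simp
  ultimately show False using card_Dp[OF assms(2)] by simp
qed



definition opar :: "'a vecU \<Rightarrow> 'a \<Rightarrow> 'a set \<Rightarrow> real" where
  "opar ob a B = (if B = {} then 0 else ob (a, B))"

lemma finite_Ups: "finite N \<Longrightarrow> finite (Ups N)"
proof -
  assume "finite N"
  moreover have "Ups N \<subseteq> N \<times> Pow N" unfolding Ups_def by auto
  ultimately show ?thesis by (meson finite_Pow_iff finite_SigmaI finite_subset)
qed

lemma inprod_eta: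
  assumes "finite N" "G \<subseteq> N \<times> N" "\<forall>a. (a, a) \<notin> G"
  shows "inprod N ob (eta N G) = (\<Sum>a\<in>N. opar ob a (pa G a))"
proof -
  define S where "S = {a\<in>N. pa G a \<noteq> {}}"
  have "inprod N ob (eta N G) = (\<Sum>p\<in>Ups N. if snd p = pa G (fst p) then ob p else 0)"
    unfolding inprod_def eta_def
    apply (intro sum.cong refl) subgoal for p by (cases p) auto done
  also have "\<dots> = (\<Sum>p\<in>{p\<in>Ups N. snd p = pa G (fst p)}. ob p)"
    using finite_Ups[OF assms(1)] by (simp add: sum.inter_filter)
  also have "{p\<in>Ups N. snd p = pa G (fst p)} = (\<lambda>a. (a, pa G a)) ` S"
  proof -
    have "pa G a \<subseteq> N - {a}" if "a \<in> N" for a using assms(2,3) unfolding pa_def by auto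
    then show ?thesis unfolding S_def Ups_def by auto
  qed
  also have "(\<Sum>p\<in>(\<lambda>a. (a, pa G a)) ` S. ob p) = (\<Sum>a\<in>S. ob (a, pa G a))"
    by (subst sum.reindex) (auto intro: inj_onI)
  also have "\<dots> = (\<Sum>a\<in>N. opar ob a (pa G a))"
    unfolding S_def opar_def using assms(1) by (simp add: sum.inter_filter if_not_P if_P) (intro sum.cong, auto)
  finally show ?thesis .
qed

fun ogr :: "('a \<times> 'a set) list \<Rightarrow> ('a \<times> 'a) set" where
  "ogr [] = {}"
| "ogr ((x, S) # ps) = ogr ps \<union> (\<lambda>y. (y, x)) ` S"

fun wfp :: "('a \<times> 'a set) list \<Rightarrow> bool" where
  "wfp [] = True"
| "wfp ((x, S) # ps) = (x \<notin> fst ` set ps \<and> S \<subseteq> fst ` set ps \<and> wfp ps)"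

lemma ogr_sub: "wfp ps \<Longrightarrow> ogr ps \<subseteq> fst ` set ps \<times> fst ` set ps"
  by (induction ps rule: wfp.induct) auto

lemma acyc_add:
  assumes "acyclic r" "r \<subseteq> V \<times> V" "x \<notin> V" "S \<subseteq> V"
  shows "acyclic (r \<union> (\<lambda>y. (y, x)) ` S)"
proof -
  let ?E = "(\<lambda>y. (y, x)) ` S"
  have rV: "r\<^sup>+ \<subseteq> V \<times> V" using assms(2) by (rule trancl_subset_Sigma)
  have claim: "(a, b) \<in> r\<^sup>+ \<or> (a \<in> V \<and> b = x)" if "(a, b) \<in> (r \<union> ?E)\<^sup>+" for a b
    using that
  proof (induction rule: trancl_induct)
    case (base y)
    then show ?case using assms(4) by auto
  next
    case (step y z)
    consider "(y, z) \<in> r" | "(y, z) \<in> ?E" using step.hyps(2) by blast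
    then show ?case
    proof cases
      case 1
      assume "(y, z) \<in> r"
      then have "y \<in> V" using assms(2) by auto
      then have "(a, y) \<in> r\<^sup>+" using step.IH assms(3) by auto
      then show ?thesis using \<open>(y, z) \<in> r\<close> by (blast intro: trancl_into_trancl)
    next
      case 2
      assume "(y, z) \<in> ?E"
      then have "z = x" by auto
      moreover have "a \<in> V" using step.IH rV by auto
      ultimately show ?thesis by auto
    qed
  qed
  show ?thesis unfolding acyclic_def
  proof
    fix a show "(a, a) \<notin> (r \<union> ?E)\<^sup>+"
    proof
      assume "(a, a) \<in> (r \<union> ?E)\<^sup>+"
      from claim[OF this] show False using assms(1,3) unfolding acyclic_def by auto
    qed
  qed
qed

lemma ogr_acyclic: "wfp ps \<Longrightarrow> acyclic (ogr ps)"
proof (induction ps rule: wfp.induct)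
  case 1 then show ?case by (simp add: acyclic_def)
next
  case (2 x S ps)
  then show ?case using acyc_add[OF _ ogr_sub[of ps]] by auto
qed

lemma ogr_pa: "wfp ps \<Longrightarrow> (x, S) \<in> set ps \<Longrightarrow> pa (ogr ps) x = S"
proof (induction ps rule: wfp.induct)
  case 1 then show ?case by simp
next
  case (2 y T ps)
  show ?case
  proof (cases "(x, S) = (y, T)")
    case True
    have "pa (ogr ps) y = {}" using ogr_sub[of ps] 2 unfolding pa_def by auto
    then show ?thesis using True unfolding pa_def by auto
  next
    case False
    then have xS: "(x, S) \<in> set ps" using 2 by auto
    then have "x \<noteq> y" using 2 by force
    then show ?thesis using 2 xS unfolding pa_def by auto
  qed
qed

lemma wfp_distinct: "wfp ps \<Longrightarrow> distinct (map fst ps)"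
  by (induction ps rule: wfp.induct) auto

definition val :: "'a vecU \<Rightarrow> ('a \<times> 'a set) list \<Rightarrow> real" where
  "val ob ps = sum_list (map (\<lambda>(x, S). opar ob x S) ps)"

lemma val_append: "val ob (ps @ qs) = val ob ps + val ob qs"
  unfolding val_def by simp

lemma ogr_DAG: "wfp ps \<Longrightarrow> fst ` set ps = N \<Longrightarrow> ogr ps \<in> DAGs N"
  unfolding DAGs_def using ogr_sub ogr_acyclic by blast

lemma ogr_value:
  assumes "wfp ps" "fst ` set ps = N" "finite N"
  shows "inprod N ob (eta N (ogr ps)) = val ob ps"
proof -
  have ac: "acyclic (ogr ps)" using ogr_acyclic[OF assms(1)] .
  have nl: "\<forall>a. (a, a) \<notin> ogr ps" using ac unfolding acyclic_def by auto
  have "inprod N ob (eta N (ogr ps)) = (\<Sum>a\<in>N. opar ob a (pa (ogr ps) a))"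
    using inprod_eta[OF assms(3) _ nl] ogr_sub[OF assms(1)] assms(2) by simp
  also have "\<dots> = sum_list (map (\<lambda>a. opar ob a (pa (ogr ps) a)) (map fst ps))"
  proof -
    have "N = set (map fst ps)" using assms(2) by simp
    then show ?thesis using sum.distinct_set_conv_list[OF wfp_distinct[OF assms(1)]] by simp
  qed
  also have "\<dots> = val ob ps" unfolding val_def
    by (simp add: comp_def, intro arg_cong[where f=sum_list] map_cong)
       (auto simp: ogr_pa[OF assms(1)])
  finally show ?thesis .
qed

fun fullB :: "'a set \<Rightarrow> 'a list \<Rightarrow> ('a \<times> 'a set) list" where
  "fullB B [] = []"
| "fullB B (x # xs) = (x, set xs \<union> B) # fullB B xs"

lemma fst_fullB[simp]: "fst ` set (fullB B xs) = set xs"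
  by (induction xs) auto

lemma fullB_append: "fullB B (xs @ ys) = fullB (set ys \<union> B) xs @ fullB B ys"
  by (induction xs) (auto simp: Un_assoc)

lemma wfp_append_fullB:
  "distinct xs \<Longrightarrow> set xs \<inter> fst ` set qs = {} \<Longrightarrow> B \<subseteq> fst ` set qs \<Longrightarrow> wfp qs
   \<Longrightarrow> wfp (fullB B xs @ qs)"
  by (induction xs) (auto simp: image_Un)

lemma ogr_append: "ogr (ps @ qs) = ogr ps \<union> ogr qs"
  by (induction ps rule: ogr.induct) auto

lemma fullB_adj: "a \<in> set xs \<Longrightarrow> b \<in> set xs \<Longrightarrow> a \<noteq> b \<Longrightarrow>
   (a, b) \<in> ogr (fullB B xs) \<or> (b, a) \<in> ogr (fullB B xs)"
  by (induction xs) auto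

lemma full_graph_list:
  assumes "distinct xs" "set xs = N"
  shows "full_graph N (ogr (fullB {} xs))"
proof -
  have w: "wfp (fullB {} xs)" using wfp_append_fullB[of xs "[]" "{}"] assms by simp
  show ?thesis unfolding full_graph_def using ogr_DAG[OF w] assms(2) fullB_adj[of _ xs _ "{}"] by auto
qed

lemma val_fullB_m:
  assumes "standardized N m" "\<forall>(a, B)\<in>Ups N. ob (a, B) = m (insert a B) - m B"
    "distinct xs" "set xs \<union> B \<subseteq> N" "set xs \<inter> B = {}" "finite N"
  shows "val ob (fullB B xs) = m (set xs \<union> B) - m B"
  using assms(3-5)
proof (induction xs)
  case Nil then show ?case by (simp add: val_def)
next
  case (Cons x xs)
  have IH: "val ob (fullB B xs) = m (set xs \<union> B) - m B" using Cons by auto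
  have "opar ob x (set xs \<union> B) = m (insert x (set xs \<union> B)) - m (set xs \<union> B)"
  proof (cases "set xs \<union> B = {}")
    case True
    have "m {x} = 0" "m {} = 0" using assms(1) Cons.prems unfolding standardized_def by auto
    then show ?thesis using True unfolding opar_def by simp
  next
    case False
    then have "(x, set xs \<union> B) \<in> Ups N" using Cons.prems unfolding Ups_def by auto
    then show ?thesis using False assms(2) unfolding opar_def by auto
  qed
  then show ?case using IH unfolding val_def by simp
qed



lemma finite_DAGs: "finite N \<Longrightarrow> finite (DAGs N)"
proof -
  assume "finite N"
  moreover have "DAGs N \<subseteq> Pow (N \<times> N)" unfolding DAGs_def by auto
  ultimately show ?thesis by (meson finite_Pow_iff finite_SigmaI finite_subset)
qed

lemma eta_in_famPoly:
  assumes "finite N" "G \<in> DAGs N"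
  shows "eta N G \<in> famPoly N"
proof -
  define l where "l = (\<lambda>H. if H = G then (1::real) else 0)"
  have "(\<Sum>H\<in>DAGs N. l H) = 1" unfolding l_def using assms finite_DAGs[OF assms(1)]
    by (simp add: sum.delta)
  moreover have "eta N G = (\<lambda>p. \<Sum>H\<in>DAGs N. l H * eta N H p)"
  proof
    fix p
    have "(\<Sum>H\<in>DAGs N. l H * eta N H p) = (\<Sum>H\<in>DAGs N. if H = G then eta N G p else 0)"
      unfolding l_def by (intro sum.cong) auto
    also have "\<dots> = eta N G p" using assms finite_DAGs[OF assms(1)] by (simp add: sum.delta')
    finally show "eta N G p = (\<Sum>H\<in>DAGs N. l H * eta N H p)" by simp
  qed
  moreover have "\<forall>H\<in>DAGs N. 0 \<le> l H" unfolding l_def by auto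
  ultimately show ?thesis unfolding famPoly_def by blast
qed

lemma eta_zero: "p \<notin> Ups N \<Longrightarrow> eta N G p = 0"
  unfolding eta_def by (cases p) auto

lemma famPoly_zero: "x \<in> famPoly N \<Longrightarrow> p \<notin> Ups N \<Longrightarrow> x p = 0"
  unfolding famPoly_def using eta_zero by fastforce

lemma valid_etas:
  assumes "finite N" "\<forall>G\<in>DAGs N. inprod N ob (eta N G) \<le> u" "x \<in> famPoly N"
  shows "inprod N ob x \<le> u"
proof -
  obtain l where l: "\<forall>G\<in>DAGs N. 0 \<le> l G" "(\<Sum>G\<in>DAGs N. l G) = 1"
      "x = (\<lambda>p. \<Sum>G\<in>DAGs N. l G * eta N G p)"
    using assms(3) unfolding famPoly_def by blast
  have "inprod N ob x = (\<Sum>p\<in>Ups N. \<Sum>G\<in>DAGs N. ob p * (l G * eta N G p))"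
    unfolding inprod_def l(3) by (simp add: sum_distrib_left)
  also have "\<dots> = (\<Sum>G\<in>DAGs N. l G * inprod N ob (eta N G))"
    unfolding inprod_def by (subst sum.swap) (simp add: sum_distrib_left mult.left_commute)
  also have "\<dots> \<le> (\<Sum>G\<in>DAGs N. l G * u)"
    using l(1) assms(2) by (intro sum_mono mult_left_mono) auto
  also have "\<dots> = u" using l(2) by (simp add: sum_distrib_right[symmetric])
  finally show ?thesis .
qed

lemma sink_sum:
  assumes "finite N" "G \<subseteq> N \<times> N" "acyclic G" "supermodular N0 m" "N \<subseteq> N0"
  shows "(\<Sum>a\<in>N. m (insert a (pa G a)) - m (pa G a)) \<le> m N - m {}"
  using assms
proof (induction "card N" arbitrary: N G rule: less_induct)
  case less
  show ?case
  proof (cases "N = {}")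
    case True then show ?thesis by simp
  next
    case False
    then obtain x where x: "x \<in> N" by auto
    have "finite G" using less.prems(1,2) by (meson finite_SigmaI finite_subset)
    hence "wf (G\<inverse>)" using less.prems(3) by (rule finite_acyclic_wf_converse)
    then obtain s where s: "s \<in> N" "\<forall>y. (y, s) \<in> G\<inverse> \<longrightarrow> y \<notin> N"
      using x unfolding wf_eq_minimal by blast
    have nos: "\<forall>b. (s, b) \<notin> G" using s less.prems(2) by auto
    define N' where "N' = N - {s}"
    define G' where "G' = G \<inter> (N' \<times> N')"
    have paeq: "pa G' a = pa G a" if "a \<in> N'" for a
      using that nos less.prems(2) unfolding pa_def G'_def N'_def by auto
    have c: "card N' < card N" unfolding N'_def using s less.prems(1) by (intro card_Diff1_less)
    have IH: "(\<Sum>a\<in>N'. m (insert a (pa G' a)) - m (pa G' a)) \<le> m N' - m {}"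
    proof (rule less.hyps[OF c])
      show "finite N'" unfolding N'_def using less.prems(1) by auto
      show "G' \<subseteq> N' \<times> N'" unfolding G'_def by auto
      show "acyclic G'" unfolding G'_def using less.prems(3) by (rule acyclic_subset) auto
      show "supermodular N0 m" by fact
      show "N' \<subseteq> N0" unfolding N'_def using less.prems(5) by auto
    qed
    have "(\<Sum>a\<in>N. m (insert a (pa G a)) - m (pa G a))
        = (m (insert s (pa G s)) - m (pa G s)) + (\<Sum>a\<in>N'. m (insert a (pa G a)) - m (pa G a))"
      unfolding N'_def using s less.prems(1) by (simp add: sum.remove)
    also have "(\<Sum>a\<in>N'. m (insert a (pa G a)) - m (pa G a)) = (\<Sum>a\<in>N'. m (insert a (pa G' a)) - m (pa G' a))"
      using paeq by simp
    also have "m (insert s (pa G s)) - m (pa G s) \<le> m N - m N'"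
    proof -
      have ss: "(s, s) \<notin> G" using less.prems(3) unfolding acyclic_def by auto
      have P: "pa G s \<subseteq> N'" unfolding pa_def N'_def using less.prems(2) ss by auto
      have "insert s (pa G s) \<union> N' = N" "insert s (pa G s) \<inter> N' = pa G s"
        using P s unfolding N'_def by auto
      moreover have "insert s (pa G s) \<subseteq> N0" "N' \<subseteq> N0" using P s less.prems(5) unfolding N'_def by auto
      ultimately have "m (insert s (pa G s)) + m N' \<le> m N + m (pa G s)"
        using less.prems(4) unfolding supermodular_def by metis
      then show ?thesis by linarith
    qed
    finally show ?thesis using IH by linarith
  qed
qed

lemma opar_m:
  assumes "standardized N m" "\<forall>(a, B)\<in>Ups N. ob (a, B) = m (insert a B) - m B"
    "a \<in> N" "B \<subseteq> N - {a}"
  shows "opar ob a B = m (insert a B) - m B"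
proof (cases "B = {}")
  case True
  have "m {a} = 0" "m {} = 0" using assms(1,3) unfolding standardized_def by auto
  then show ?thesis using True unfolding opar_def by simp
next
  case False
  then have "(a, B) \<in> Ups N" using assms unfolding Ups_def by auto
  then show ?thesis using False assms(2) unfolding opar_def by auto
qed

lemma validity:
  assumes "finite N" "std_supermod N m" "\<forall>(a, B)\<in>Ups N. ob (a, B) = m (insert a B) - m B"
    "G \<in> DAGs N"
  shows "inprod N ob (eta N G) \<le> m N"
proof -
  have G: "G \<subseteq> N \<times> N" "acyclic G" using assms(4) unfolding DAGs_def by auto
  have nl: "\<forall>a. (a, a) \<notin> G" using G(2) unfolding acyclic_def by auto
  have "inprod N ob (eta N G) = (\<Sum>a\<in>N. opar ob a (pa G a))"
    using inprod_eta[OF assms(1) G(1) nl] .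
  also have "\<dots> = (\<Sum>a\<in>N. m (insert a (pa G a)) - m (pa G a))"
  proof (intro sum.cong refl)
    fix a assume a: "a \<in> N"
    have "pa G a \<subseteq> N - {a}" using G(1) nl unfolding pa_def by auto
    then show "opar ob a (pa G a) = m (insert a (pa G a)) - m (pa G a)"
      using opar_m[OF _ assms(3) a] assms(2) unfolding std_supermod_def by blast
  qed
  also have "\<dots> \<le> m N - m {}"
    using sink_sum[OF assms(1) G, of N m] assms(2) unfolding std_supermod_def by auto
  also have "m {} = 0" using assms(2) unfolding std_supermod_def standardized_def by auto
  finally show ?thesis by simp
qed

lemma uniqueness:
  assumes "finite N" "standardized N m1" "standardized N m2"
    "\<forall>(a, B)\<in>Ups N. m1 (insert a B) - m1 B = m2 (insert a B) - m2 B"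
    "S \<subseteq> N"
  shows "m1 S = m2 S"
proof -
  have "finite S" using assms(1,5) finite_subset by auto
  then show ?thesis using assms(5)
  proof (induction S rule: finite_induct)
    case empty
    then show ?case using assms(2,3) unfolding standardized_def by auto
  next
    case (insert a B)
    show ?case
    proof (cases "B = {}")
      case True
      then show ?thesis using assms(2,3) insert.prems unfolding standardized_def by auto
    next
      case False
      then have "(a, B) \<in> Ups N" using insert unfolding Ups_def by auto
      then show ?thesis using assms(4) insert by auto
    qed
  qed
qed

lemma ssm_nonneg:
  assumes "finite N" "std_supermod N m" "S \<subseteq> N"
  shows "0 \<le> m S"
proof -
  have "finite S" using assms(1,3) finite_subset by auto
  then show ?thesis using assms(3)
  proof (induction S rule: finite_induct)
    case empty
    then show ?case using assms(2) unfolding std_supermod_def standardized_def by auto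
  next
    case (insert a B)
    have "m B + m {a} \<le> m (B \<union> {a}) + m (B \<inter> {a})"
      using assms(2) insert.prems unfolding std_supermod_def supermodular_def
      by (metis insert_subset empty_subsetI insert_is_Un sup.bounded_iff)
    moreover have "m {a} = 0" "m {} = 0" using assms(2) insert.prems unfolding std_supermod_def standardized_def by auto
    moreover have "B \<inter> {a} = {}" "B \<union> {a} = insert a B" using insert.hyps by auto
    ultimately show ?case using insert by auto
  qed
qed

lemma ssm_le_top:
  assumes "finite N" "std_supermod N m" "S \<subseteq> N"
  shows "m S \<le> m N"
proof -
  have "m S + m (N - S) \<le> m (S \<union> (N - S)) + m (S \<inter> (N - S))"
    using assms(2,3) unfolding std_supermod_def supermodular_def by (meson Diff_subset)
  moreover have "S \<union> (N - S) = N" "S \<inter> (N - S) = {}" using assms(3) by auto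
  moreover have "m {} = 0" using assms(2) unfolding std_supermod_def standardized_def by auto
  moreover have "0 \<le> m (N - S)" using ssm_nonneg[OF assms(1,2)] by auto
  ultimately show ?thesis by auto
qed



lemma val_cons: "val ob (fullB B (x # xs)) = opar ob x (set xs \<union> B) + val ob (fullB B xs)"
  unfolding val_def by simp

declare fullB.simps(2) [simp del]

lemma wfp_full: "distinct xs \<Longrightarrow> wfp (fullB {} xs)"
  using wfp_append_fullB[of xs "[]" "{}"] by simp

lemma obtain_list:
  assumes "finite S"
  obtains xs where "distinct xs" "set xs = S"
  using finite_distinct_list[OF assms] by blast

lemma construct_m:
  assumes fin: "finite N"
    and valid: "\<forall>G\<in>DAGs N. inprod N ob (eta N G) \<le> u"
    and tight: "\<forall>H. full_graph N H \<longrightarrow> inprod N ob (eta N H) = u"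
  shows "\<exists>m. std_supermod N m \<and> (\<forall>(a, B)\<in>Ups N. ob (a, B) = m (insert a B) - m B) \<and> m N = u"
proof -
  have full_val: "val ob (fullB {} xs) = u" if "distinct xs" "set xs = N" for xs
  proof -
    have "inprod N ob (eta N (ogr (fullB {} xs))) = u"
      using tight full_graph_list[OF that] by blast
    moreover have "inprod N ob (eta N (ogr (fullB {} xs))) = val ob (fullB {} xs)"
      using ogr_value[OF wfp_full[OF that(1)] _ fin] that by simp
    ultimately show ?thesis by simp
  qed
  have swap: "val ob (fullB {} (a # b # ws)) = val ob (fullB {} (b # a # ws))"
    if "a \<noteq> b" "a \<in> N" "b \<in> N" "distinct ws" "a \<notin> set ws" "b \<notin> set ws" "set ws \<subseteq> N" for a b ws
  proof -
    obtain rs where rs: "distinct rs" "set rs = N - set ws - {a, b}"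
      using obtain_list[of "N - set ws - {a, b}"] fin by auto
    have "val ob (fullB {} (rs @ a # b # ws)) = u" using rs that by (intro full_val) auto
    moreover have "val ob (fullB {} (rs @ b # a # ws)) = u" using rs that by (intro full_val) auto
    moreover have "set (a # b # ws) = set (b # a # ws)" by auto
    ultimately show ?thesis unfolding fullB_append val_append by (simp only:)
  qed
  have indep: "\<forall>xs ys. length xs = n \<longrightarrow> distinct xs \<longrightarrow> distinct ys \<longrightarrow> set xs = set ys \<longrightarrow> set xs \<subseteq> N
      \<longrightarrow> val ob (fullB {} xs) = val ob (fullB {} ys)" for n
  proof (induction n rule: less_induct)
    case (less n)
    show ?case
    proof (intro allI impI)
      fix xs ys :: "'a list"
      assume h: "length xs = n" "distinct xs" "distinct ys" "set xs = set ys" "set xs \<subseteq> N"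
      show "val ob (fullB {} xs) = val ob (fullB {} ys)"
      proof (cases xs)
        case Nil
        then show ?thesis using h by simp
      next
        case (Cons a xs')
        then obtain b ys' where ys: "ys = b # ys'" using h by (cases ys) auto
        have lx: "length xs' < n" using h Cons by simp
        show ?thesis
        proof (cases "a = b")
          case True
          have "set xs' = set ys'" using h Cons ys True by auto
          have "val ob (fullB {} xs') = val ob (fullB {} ys')"
            by (rule less.IH[OF lx, rule_format]) (use h Cons ys \<open>set xs' = set ys'\<close> in auto)
          then show ?thesis using Cons ys True \<open>set xs' = set ys'\<close> by (simp add: val_cons)
        next
          case False
          obtain ws where ws: "distinct ws" "set ws = set xs - {a, b}"
            using obtain_list[of "set xs - {a, b}"] by auto
          have bx: "b \<in> set xs'" using h Cons ys False by auto
          have ay: "a \<in> set ys'" using h Cons ys False by auto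
          have sx: "set xs' = set (b # ws)" "distinct (b # ws)"
            using h Cons ws bx by auto
          have sy: "set ys' = set (a # ws)" "distinct (a # ws)"
            using h Cons ys ws ay by auto
          have e1: "val ob (fullB {} xs') = val ob (fullB {} (b # ws))"
            by (rule less.IH[OF lx, rule_format]) (use sx h Cons in auto)
          have e2: "val ob (fullB {} ys') = val ob (fullB {} (a # ws))"
          proof -
            have "length ys = length xs" using h(2,3,4) distinct_card by metis
            then have "length ys' < n" using h Cons ys lx by simp
            then show ?thesis by (rule less.IH[rule_format]) (use sy h Cons ys in auto)
          qed
          have "val ob (fullB {} xs) = val ob (fullB {} (a # b # ws))"
            unfolding Cons val_cons[of _ _ a] e1 sx(1) ..
          moreover have "val ob (fullB {} ys) = val ob (fullB {} (b # a # ws))"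
            unfolding ys val_cons[of _ _ b] e2 sy(1) ..
          moreover have "val ob (fullB {} (a # b # ws)) = val ob (fullB {} (b # a # ws))"
            using swap[of a b ws] False h Cons ys ws by auto
          ultimately show ?thesis by simp
        qed
      qed
    qed
  qed
  define m where "m S = val ob (fullB {} (SOME xs. distinct xs \<and> set xs = S))" for S
  have m_eq: "m S = val ob (fullB {} xs)" if "S \<subseteq> N" "distinct xs" "set xs = S" for S xs
  proof -
    have "\<exists>xs. distinct xs \<and> set xs = S" using that by blast
    then have s: "distinct (SOME xs. distinct xs \<and> set xs = S) \<and> set (SOME xs. distinct xs \<and> set xs = S) = S"
      by (rule someI_ex)
    show ?thesis unfolding m_def by (rule indep[rule_format, OF refl]) (use s that in auto)
  qed
  have m_ins: "m (insert a B) = opar ob a B + m B" if hh: "a \<in> N" "B \<subseteq> N" "a \<notin> B" for a B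
  proof -
    have "finite B" using fin hh finite_subset by auto
    then obtain xs where xs: "distinct xs" "set xs = B" using obtain_list[of B] by metis
    have "m (insert a B) = val ob (fullB {} (a # xs))" using hh xs by (intro m_eq) auto
    moreover have "m B = val ob (fullB {} xs)" using hh xs by (intro m_eq) auto
    ultimately show ?thesis using xs by (simp add: val_cons)
  qed
  have m0: "m {} = 0" using m_eq[of "{}" "[]"] by (simp add: val_def)
  have std: "standardized N m" unfolding standardized_def
  proof (intro allI impI)
    fix S assume S: "S \<subseteq> N" "card S \<le> 1"
    have "finite S" using S fin finite_subset by auto
    show "m S = 0"
    proof (cases "card S = 0")
      case True
      then have "S = {}" using \<open>finite S\<close> by simp
      then show ?thesis using m0 by simp
    next
      case False
      then have "card S = 1" using S(2) by linarith
      then obtain a where "S = {a}" by (rule card_1_singletonE)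
      then show ?thesis using m_ins[of a "{}"] m0 S by (simp add: opar_def)
    qed
  qed
  have diffs: "\<forall>(a, B)\<in>Ups N. ob (a, B) = m (insert a B) - m B"
  proof (intro ballI, clarify)
    fix a B assume "(a, B) \<in> Ups N"
    then have "a \<in> N" "B \<subseteq> N" "a \<notin> B" "B \<noteq> {}" unfolding Ups_def by auto
    then show "ob (a, B) = m (insert a B) - m B" using m_ins by (simp add: opar_def)
  qed
  have mN: "m N = u"
  proof -
    obtain xs where xs: "distinct xs" "set xs = N" using obtain_list fin by metis
    show ?thesis using m_eq[OF _ xs] full_val[OF xs] by simp
  qed
  have super: "supermodular N m" unfolding supermodular_def
  proof (intro allI impI)
    fix U V assume UV: "U \<subseteq> N" "V \<subseteq> N"
    have fU: "finite U" "finite V" using UV fin finite_subset by auto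
    obtain ws where ws: "distinct ws" "set ws = U \<inter> V" using obtain_list[of "U \<inter> V"] fU by auto
    obtain us where us: "distinct us" "set us = U - V" using obtain_list[of "U - V"] fU by auto
    obtain vs where vs: "distinct vs" "set vs = V - U" using obtain_list[of "V - U"] fU by auto
    obtain rs where rs: "distinct rs" "set rs = N - (U \<union> V)" using obtain_list[of "N - (U \<union> V)"] fin by auto
    obtain xs where xs: "distinct xs" "set xs = U \<union> V" using obtain_list[of "U \<union> V"] fU by auto
    define ps where "ps = fullB (U \<union> V) rs @ fullB (U \<inter> V) vs @ fullB (U \<inter> V) us @ fullB {} ws"
    have w1: "wfp (fullB {} ws)" using wfp_full[OF ws(1)] .
    have w2: "wfp (fullB (U \<inter> V) us @ fullB {} ws)"
      using ws us by (intro wfp_append_fullB w1) auto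
    have w3: "wfp (fullB (U \<inter> V) vs @ fullB (U \<inter> V) us @ fullB {} ws)"
      using ws us vs by (intro wfp_append_fullB w2) (auto simp: image_Un)
    have w4: "wfp ps" unfolding ps_def
      using ws us vs rs by (intro wfp_append_fullB w3) (auto simp: image_Un)
    have fps: "fst ` set ps = N" unfolding ps_def using ws us vs rs UV by (auto simp: image_Un)
    have mUV: "m (U \<inter> V) = val ob (fullB {} ws)" using UV ws by (intro m_eq) auto
    have "inprod N ob (eta N (ogr ps)) \<le> u"
      using valid ogr_DAG[OF w4 fps] by blast
    then have "val ob ps \<le> u" using ogr_value[OF w4 fps fin] by simp
    moreover have "val ob ps = val ob (fullB (U \<union> V) rs) + val ob (fullB (U \<inter> V) vs)
        + val ob (fullB (U \<inter> V) us) + m (U \<inter> V)"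
      unfolding ps_def val_append mUV by simp
    moreover have "m N = val ob (fullB (U \<union> V) rs) + m (U \<union> V)"
    proof -
      have "m N = val ob (fullB {} (rs @ xs))" using rs xs UV by (intro m_eq) auto
      also have "\<dots> = val ob (fullB (U \<union> V) rs) + val ob (fullB {} xs)"
        unfolding fullB_append val_append using xs by simp
      moreover have "m (U \<union> V) = val ob (fullB {} xs)" using UV xs by (intro m_eq) auto
      ultimately show ?thesis by simp
    qed
    moreover have "m V = val ob (fullB (U \<inter> V) vs) + m (U \<inter> V)"
    proof -
      have "m V = val ob (fullB {} (vs @ ws))" using vs ws UV by (intro m_eq) auto
      also have "\<dots> = val ob (fullB (U \<inter> V) vs) + val ob (fullB {} ws)"
        unfolding fullB_append val_append using ws by simp
      finally show ?thesis using mUV by simp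
    qed
    moreover have "m U = val ob (fullB (U \<inter> V) us) + m (U \<inter> V)"
    proof -
      have "m U = val ob (fullB {} (us @ ws))" using us ws UV by (intro m_eq) auto
      also have "\<dots> = val ob (fullB (U \<inter> V) us) + val ob (fullB {} ws)"
        unfolding fullB_append val_append using ws by simp
      finally show ?thesis using mUV by simp
    qed
    ultimately show "m U + m V \<le> m (U \<union> V) + m (U \<inter> V)" using mN by linarith
  qed
  show ?thesis using std super diffs mN unfolding std_supermod_def by blast
qed



lemma inprod_zero[simp]: "inprod N ob (\<lambda>_. 0) = 0"
  unfolding inprod_def by simp

lemma inprod_add: "inprod N (\<lambda>p. a p + b p) y = inprod N a y + inprod N b y"
  unfolding inprod_def by (simp add: sum.distrib algebra_simps)

lemma inprod_scale: "inprod N (\<lambda>p. c * a p) y = c * inprod N a y"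
  unfolding inprod_def by (simp add: sum_distrib_left algebra_simps)

lemma inprod_cong: "(\<And>p. p \<in> Ups N \<Longrightarrow> a p = b p) \<Longrightarrow> inprod N a y = inprod N b y"
  unfolding inprod_def by simp

lemma lift_sum:
  assumes "finite D"
  shows "(\<Sum>j\<in>Dp D. z j * lift y j) = z None + (\<Sum>p\<in>D. z (Some p) * y p)"
  using sum_Dp[OF assms, of "\<lambda>j. z j * lift y j"] unfolding lift_def by simp

lemma empty_DAG: "{} \<in> DAGs N"
  unfolding DAGs_def by (simp add: acyclic_def)

lemma eta_empty: "eta N {} = (\<lambda>_. 0)"
  unfolding eta_def pa_def Ups_def by (auto simp: fun_eq_iff)

lemma zero_famPoly:
  assumes "finite N" shows "(\<lambda>_. 0) \<in> famPoly N"
proof -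
  have "eta N {} \<in> famPoly N" using eta_in_famPoly[OF assms empty_DAG] .
  then show ?thesis unfolding eta_empty .
qed

lemma dl_famPoly:
  assumes "finite N" "p \<in> Ups N"
  shows "(\<lambda>q. if q = p then 1 else 0) \<in> famPoly N"
proof -
  obtain a B where p: "p = (a, B)" by (cases p)
  have h: "a \<in> N" "B \<noteq> {}" "B \<subseteq> N - {a}" using assms(2) p unfolding Ups_def by auto
  define G where "G = {} \<union> (\<lambda>y. (y, a)) ` B"
  have "acyclic G" unfolding G_def
    using acyc_add[of "{}" B a B] h by (auto simp: acyclic_def)
  moreover have "G \<subseteq> N \<times> N" unfolding G_def using h by auto
  ultimately have GD: "G \<in> DAGs N" unfolding DAGs_def by auto
  have pa: "pa G x = (if x = a then B else {})" for x unfolding G_def pa_def by auto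
  have "eta N G = (\<lambda>q. if q = p then 1 else 0)"
  proof
    fix q :: "'a \<times> 'a set"
    obtain x C where q: "q = (x, C)" by (cases q)
    show "eta N G q = (if q = p then 1 else 0)"
      unfolding eta_def q p pa using assms(2) p unfolding Ups_def by auto
  qed
  then show ?thesis using eta_in_famPoly[OF assms(1) GD] by simp
qed

lemma famPoly_bound:
  assumes "finite N" "T \<subseteq> famPoly N" "aff_indep T"
  shows "card T \<le> card (Ups N) + 1"
  using aff_bound[OF assms(3) finite_Ups[OF assms(1)]] assms(2) famPoly_zero by blast

lemma famPoly_affdim:
  assumes "finite N"
  shows "affdim (famPoly N) = int (card (Ups N))"
proof -
  let ?D = "Ups N"
  define dl where "dl p = (\<lambda>q. if q = p then (1::real) else 0)" for p :: "'a \<times> 'a set"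
  define T0 where "T0 = insert (\<lambda>_. 0) (dl ` ?D)"
  have fD: "finite ?D" using finite_Ups[OF assms] .
  have inj: "inj_on dl ?D" unfolding dl_def inj_on_def by (metis zero_neq_one)
  have n0: "(\<lambda>_. 0) \<notin> dl ` ?D"
  proof
    assume "(\<lambda>_. 0) \<in> dl ` ?D"
    then obtain p where "(\<lambda>_. 0) = dl p" by auto
    then have "(0::real) = dl p p" by metis
    then show False unfolding dl_def by simp
  qed
  have cT0: "card T0 = card ?D + 1" unfolding T0_def using n0 fD card_image[OF inj] by simp
  have sub: "T0 \<subseteq> famPoly N" unfolding T0_def dl_def using zero_famPoly[OF assms] dl_famPoly[OF assms] by auto
  have ai: "aff_indep T0" unfolding aff_indep_def
  proof (intro conjI allI impI)
    show "finite T0" unfolding T0_def using fD by auto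
    fix c :: "'a vecU \<Rightarrow> real"
    assume c: "sum c T0 = 0 \<and> (\<forall>p. (\<Sum>t\<in>T0. c t * t p) = 0)"
    have cd: "c (dl p) = 0" if "p \<in> ?D" for p
    proof -
      have "(\<Sum>t\<in>T0. c t * t p) = (\<Sum>t\<in>dl ` ?D. c t * t p)"
        unfolding T0_def using n0 fD by simp
      also have "\<dots> = (\<Sum>q\<in>?D. c (dl q) * dl q p)" using sum.reindex[OF inj] by simp
      also have "\<dots> = c (dl p)" unfolding dl_def using that fD by (simp add: if_distrib sum.delta cong: if_cong)
      finally show ?thesis using c by simp
    qed
    have "sum c T0 = c (\<lambda>_. 0) + (\<Sum>t\<in>dl ` ?D. c t)" unfolding T0_def using n0 fD by simp
    also have "(\<Sum>t\<in>dl ` ?D. c t) = (\<Sum>q\<in>?D. c (dl q))" using sum.reindex[OF inj] by simp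
    also have "\<dots> = 0" using cd by simp
    finally have "c (\<lambda>_. 0) = 0" using c by simp
    then show "\<forall>t\<in>T0. c t = 0" unfolding T0_def using cd by auto
  qed
  have "(GREATEST k. \<exists>T. T \<subseteq> famPoly N \<and> aff_indep T \<and> card T = k) = card ?D + 1"
  proof (rule Greatest_equality)
    show "\<exists>T. T \<subseteq> famPoly N \<and> aff_indep T \<and> card T = card ?D + 1" using sub ai cT0 by blast
    fix y assume "\<exists>T. T \<subseteq> famPoly N \<and> aff_indep T \<and> card T = y"
    then show "y \<le> card ?D + 1" using famPoly_bound[OF assms] by blast
  qed
  moreover have "famPoly N \<noteq> {}" using zero_famPoly[OF assms] by auto
  ultimately show ?thesis unfolding affdim_def by simp
qed

lemma ins0:
  assumes "aff_indep T" "\<forall>t\<in>T. inprod N ob t = u" "u \<noteq> 0" "finite N"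
  shows "aff_indep (insert (\<lambda>_. 0) T)" "(\<lambda>_. 0) \<notin> T"
proof -
  show n0: "(\<lambda>_. 0) \<notin> T" using assms(2,3) by force
  have fT: "finite T" using assms(1) unfolding aff_indep_def by auto
  show "aff_indep (insert (\<lambda>_. 0) T)" unfolding aff_indep_def
  proof (intro conjI allI impI)
    show "finite (insert (\<lambda>_. 0) T)" using fT by simp
    fix c :: "'a vecU \<Rightarrow> real"
    assume c: "sum c (insert (\<lambda>_. 0) T) = 0 \<and> (\<forall>p. (\<Sum>t\<in>insert (\<lambda>_. 0) T. c t * t p) = 0)"
    have cp: "\<forall>p. (\<Sum>t\<in>T. c t * t p) = 0" using c n0 fT by simp
    have "0 = (\<Sum>p\<in>Ups N. ob p * (\<Sum>t\<in>T. c t * t p))" by (simp only: cp mult_zero_right sum.neutral_const)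
    also have "\<dots> = (\<Sum>t\<in>T. c t * inprod N ob t)"
      unfolding inprod_def by (simp add: sum_distrib_left sum.swap[of _ T] mult.left_commute)
    also have "\<dots> = u * sum c T" using assms(2) by (simp add: sum_distrib_left mult.commute)
    finally have sT: "sum c T = 0" using assms(3) by simp
    then have "c (\<lambda>_. 0) = 0" using c n0 fT by simp
    moreover have "\<forall>t\<in>T. c t = 0" using assms(1) sT cp unfolding aff_indep_def by blast
    ultimately show "\<forall>t\<in>insert (\<lambda>_. 0) T. c t = 0" by simp
  qed
qed

lemma face_bound:
  assumes "finite N" "u \<noteq> 0" "T \<subseteq> {x\<in>famPoly N. inprod N ob x = u}" "aff_indep T"
  shows "card T \<le> card (Ups N)"
proof -
  have "aff_indep (insert (\<lambda>_. 0) T)" "(\<lambda>_. 0) \<notin> T" using ins0[OF assms(4) _ assms(2,1)] assms(3) by auto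
  moreover have "insert (\<lambda>_. 0) T \<subseteq> famPoly N" using assms(3) zero_famPoly[OF assms(1)] by auto
  ultimately have "card (insert (\<lambda>_. 0) T) \<le> card (Ups N) + 1" using famPoly_bound[OF assms(1)] by blast
  moreover have "finite T" using assms(4) unfolding aff_indep_def by auto
  ultimately show ?thesis using \<open>(\<lambda>_. 0) \<notin> T\<close> by simp
qed

lemma eps_exists:
  fixes P Q :: "'b \<Rightarrow> real"
  assumes "finite A" "\<forall>a\<in>A. 0 \<le> P a \<and> (P a = 0 \<longrightarrow> Q a = 0)"
  shows "\<exists>e>0. \<forall>a\<in>A. e * \<bar>Q a\<bar> \<le> P a"
  using assms
proof (induction A rule: finite_induct)
  case empty then show ?case by (intro exI[of _ 1]) auto
next
  case (insert x A)
  then obtain e where e: "e > 0" "\<forall>a\<in>A. e * \<bar>Q a\<bar> \<le> P a" by auto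
  show ?case
  proof (cases "P x = 0")
    case True
    then show ?thesis using e insert.prems by auto
  next
    case False
    then have px: "P x > 0" using insert.prems by force
    define e' where "e' = min e (P x / (\<bar>Q x\<bar> + 1))"
    have e'p: "e' > 0" unfolding e'_def using e px by auto
    have "e' * \<bar>Q x\<bar> \<le> P x"
    proof -
      have "e' * \<bar>Q x\<bar> \<le> P x / (\<bar>Q x\<bar> + 1) * \<bar>Q x\<bar>"
        unfolding e'_def by (intro mult_right_mono) auto
      also have "\<dots> \<le> P x / (\<bar>Q x\<bar> + 1) * (\<bar>Q x\<bar> + 1)"
        using px by (intro mult_left_mono) auto
      also have "\<dots> = P x" by simp
      finally show ?thesis .
    qed
    moreover have "\<forall>a\<in>A. e' * \<bar>Q a\<bar> \<le> P a"
    proof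
      fix a assume "a \<in> A"
      have "e' * \<bar>Q a\<bar> \<le> e * \<bar>Q a\<bar>" unfolding e'_def by (intro mult_right_mono) auto
      then show "e' * \<bar>Q a\<bar> \<le> P a" using e(2) \<open>a \<in> A\<close> by force
    qed
    ultimately show ?thesis using e'p by auto
  qed
qed

lemma ssm_scale: "0 \<le> c \<Longrightarrow> std_supermod N m \<Longrightarrow> std_supermod N (\<lambda>S. c * m S)"
  unfolding std_supermod_def standardized_def supermodular_def
  by (auto simp flip: distrib_left intro: mult_left_mono)



lemma u_eq_mN:
  assumes fin: "finite N" and ssm: "std_supermod N m"
    and diffs: "\<forall>(a, B)\<in>Ups N. ob (a, B) = m (insert a B) - m B"
    and tight: "\<forall>H. full_graph N H \<longrightarrow> inprod N ob (eta N H) = u"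
  shows "u = m N" "\<exists>H. full_graph N H"
proof -
  obtain xs where xs: "distinct xs" "set xs = N" using obtain_list[OF fin] by metis
  have "full_graph N (ogr (fullB {} xs))" using full_graph_list[OF xs] .
  then have "inprod N ob (eta N (ogr (fullB {} xs))) = u" using tight by blast
  moreover have "inprod N ob (eta N (ogr (fullB {} xs))) = val ob (fullB {} xs)"
    using ogr_value[OF wfp_full[OF xs(1)] _ fin] xs by simp
  moreover have "val ob (fullB {} xs) = m (set xs \<union> {}) - m {}"
    using val_fullB_m[OF _ diffs xs(1) _ _ fin] ssm xs unfolding std_supermod_def by auto
  moreover have "m {} = 0" using ssm unfolding std_supermod_def standardized_def by auto
  ultimately show "u = m N" using xs by simp
  show "\<exists>H. full_graph N H" using \<open>full_graph N (ogr (fullB {} xs))\<close> by blast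
qed

lemma mN_pos:
  assumes "finite N" "std_supermod N m" "\<exists>S\<subseteq>N. m S \<noteq> 0"
  shows "0 < m N"
proof -
  obtain S where "S \<subseteq> N" "m S \<noteq> 0" using assms(3) by blast
  then show ?thesis using ssm_nonneg[OF assms(1,2)] ssm_le_top[OF assms(1,2)]
    by (metis less_eq_real_def order_le_less_trans)
qed


lemma aff_indep_empty: "aff_indep {}"
  unfolding aff_indep_def by simp

lemma dir2:
  assumes fin: "finite N" and ext: "extreme_ssm N m"
    and diffs: "\<forall>(a, B)\<in>Ups N. ob (a, B) = m (insert a B) - m B"
    and tight: "\<forall>H. full_graph N H \<longrightarrow> inprod N ob (eta N H) = u"
  shows "facet_defining N ob u"
proof -
  have ssm: "std_supermod N m" and nz: "\<exists>S\<subseteq>N. m S \<noteq> 0" using ext unfolding extreme_ssm_def by auto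
  have uN: "u = m N" and exH: "\<exists>H. full_graph N H" using u_eq_mN[OF fin ssm diffs tight] by auto
  have upos: "u > 0" using mN_pos[OF fin ssm nz] uN by simp
  have valid_eta: "\<forall>G\<in>DAGs N. inprod N ob (eta N G) \<le> u"
    using validity[OF fin ssm diffs] uN by auto
  have valid: "\<forall>x\<in>famPoly N. inprod N ob x \<le> u" using valid_etas[OF fin valid_eta] by blast
  define F where "F = {x\<in>famPoly N. inprod N ob x = u}"
  define d where "d = card (Ups N)"
  define P where "P = (\<lambda>k. \<exists>T. T \<subseteq> F \<and> aff_indep T \<and> card T = k)"
  have fD: "finite (Ups N)" using finite_Ups[OF fin] .
  have P0: "P 0" unfolding P_def using aff_indep_empty by auto
  have Pb: "k \<le> d" if "P k" for k
    using that face_bound[OF fin _ _, of u _ ob] upos unfolding P_def F_def d_def by auto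
  have Pg: "P (Greatest P)" using GreatestI_nat[of P 0 d, OF P0 Pb] .
  have Pl: "k \<le> Greatest P" if "P k" for k using Greatest_le_nat[of P k d, OF that Pb] .
  have famF: "eta N H \<in> F" if "full_graph N H" for H
    using that tight eta_in_famPoly[OF fin] unfolding F_def full_graph_def by auto
  have ge: "d \<le> Greatest P"
  proof (rule ccontr)
    assume lt: "\<not> d \<le> Greatest P"
    obtain T where T: "T \<subseteq> F" "aff_indep T" "card T = Greatest P" using Pg unfolding P_def by blast
    have fT: "finite T" using T(2) unfolding aff_indep_def by auto
    define Q where "Q = insert (\<lambda>_. 0) T"
    define R where "R = lift ` Q"
    have "card R \<le> card Q" unfolding R_def Q_def using fT by (intro card_image_le) auto
    also have "\<dots> \<le> card T + 1" unfolding Q_def using fT by (simp add: card_insert_if)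
    finally have "card R < card (Dp (Ups N))" using lt T(3) card_Dp[OF fD] unfolding d_def by linarith
    moreover have "finite R" unfolding R_def Q_def using fT by auto
    moreover have "finite (Dp (Ups N))" unfolding Dp_def using fD by auto
    ultimately obtain x where x: "\<exists>j\<in>Dp (Ups N). x j \<noteq> 0"
        "\<forall>r\<in>R. (\<Sum>j\<in>Dp (Ups N). r j * x j) = 0"
      using hom_system by blast
    define h where "h p = x (Some p)" for p
    define g where "g y = inprod N h y" for y
    have xq: "x None + g q = 0" if "q \<in> Q" for q
    proof -
      have "(\<Sum>j\<in>Dp (Ups N). lift q j * x j) = 0" using x(2) that unfolding R_def by auto
      moreover have "(\<Sum>j\<in>Dp (Ups N). lift q j * x j) = (\<Sum>j\<in>Dp (Ups N). x j * lift q j)"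
        by (simp add: mult.commute)
      ultimately show ?thesis using lift_sum[OF fD, of x q] unfolding g_def inprod_def h_def by simp
    qed
    have xN: "x None = 0" using xq[of "\<lambda>_. 0"] unfolding Q_def g_def by simp
    have gT: "g t = 0" if "t \<in> T" for t using xq[of t] that xN unfolding Q_def by simp
    have glin: "(\<Sum>t\<in>S. c t * g t) = (\<Sum>p\<in>Ups N. h p * (\<Sum>t\<in>S. c t * t p))" for S c
      unfolding g_def inprod_def by (simp add: sum_distrib_left sum.swap[of _ S] mult.left_commute)
    have gF: "g y = 0" if y: "y \<in> F" for y
    proof (cases "y \<in> T")
      case True then show ?thesis using gT by simp
    next
      case False
      have "\<not> aff_indep (insert y T)"
      proof
        assume "aff_indep (insert y T)"
        moreover have "insert y T \<subseteq> F" using T(1) y by auto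
        ultimately have "P (card (insert y T))" unfolding P_def by blast
        then have "card (insert y T) \<le> Greatest P" by (rule Pl)
        then show False using False fT T(3) by simp
      qed
      then obtain c where c: "sum c (insert y T) = 0" "\<forall>p. (\<Sum>t\<in>insert y T. c t * t p) = 0"
          "\<exists>t\<in>insert y T. c t \<noteq> 0"
        unfolding aff_indep_def using fT by blast
      have cy: "c y \<noteq> 0"
      proof
        assume c0: "c y = 0"
        have "sum c T = 0" using c(1) c0 False fT by simp
        moreover have "\<forall>p. (\<Sum>t\<in>T. c t * t p) = 0" using c(2) c0 False fT by simp
        ultimately have "\<forall>t\<in>T. c t = 0" using T(2) unfolding aff_indep_def by blast
        then show False using c(3) c0 by auto
      qed
      have "(\<Sum>t\<in>insert y T. c t * g t) = 0" unfolding glin by (simp only: c(2) mult_zero_right sum.neutral_const)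
      moreover have "(\<Sum>t\<in>insert y T. c t * g t) = c y * g y" using False fT gT by simp
      ultimately show ?thesis using cy by simp
    qed
    have "\<exists>e>0. \<forall>G\<in>DAGs N. e * \<bar>g (eta N G)\<bar> \<le> u - inprod N ob (eta N G)"
    proof (rule eps_exists)
      show "finite (DAGs N)" using finite_DAGs[OF fin] .
      show "\<forall>G\<in>DAGs N. 0 \<le> u - inprod N ob (eta N G) \<and> (u - inprod N ob (eta N G) = 0 \<longrightarrow> g (eta N G) = 0)"
      proof
        fix G assume G: "G \<in> DAGs N"
        have "u - inprod N ob (eta N G) = 0 \<longrightarrow> eta N G \<in> F"
          unfolding F_def using eta_in_famPoly[OF fin G] by auto
        then show "0 \<le> u - inprod N ob (eta N G) \<and> (u - inprod N ob (eta N G) = 0 \<longrightarrow> g (eta N G) = 0)"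
          using valid_eta G gF by auto
      qed
    qed
    then obtain e where e: "e > 0" "\<forall>G\<in>DAGs N. e * \<bar>g (eta N G)\<bar> \<le> u - inprod N ob (eta N G)" by blast
    define ob1 where "ob1 p = ob p + (- e) * h p" for p
    define ob2 where "ob2 p = ob p + e * h p" for p
    have i1: "inprod N ob1 y = inprod N ob y - e * g y" for y
      unfolding ob1_def g_def using inprod_add[of N ob "\<lambda>p. (-e) * h p" y] inprod_scale[of N "-e" h y] by simp
    have i2: "inprod N ob2 y = inprod N ob y + e * g y" for y
      unfolding ob2_def g_def using inprod_add[of N ob "\<lambda>p. e * h p" y] inprod_scale[of N "e" h y] by simp
    have ab: "- (e * \<bar>z\<bar>) \<le> e * z" "e * z \<le> e * \<bar>z\<bar>" for z :: real
      using e(1) by (auto simp: abs_if)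
    have v1: "\<forall>G\<in>DAGs N. inprod N ob1 (eta N G) \<le> u"
      using e(2) ab unfolding i1 by (smt (verit))
    have v2: "\<forall>G\<in>DAGs N. inprod N ob2 (eta N G) \<le> u"
      using e(2) ab unfolding i2 by (smt (verit))
    have t1: "\<forall>H. full_graph N H \<longrightarrow> inprod N ob1 (eta N H) = u"
      using famF gF tight unfolding i1 by simp
    have t2: "\<forall>H. full_graph N H \<longrightarrow> inprod N ob2 (eta N H) = u"
      using famF gF tight unfolding i2 by simp
    obtain m1 where m1: "std_supermod N m1" "\<forall>(a, B)\<in>Ups N. ob1 (a, B) = m1 (insert a B) - m1 B" "m1 N = u"
      using construct_m[OF fin v1 t1] by blast
    obtain m2 where m2: "std_supermod N m2" "\<forall>(a, B)\<in>Ups N. ob2 (a, B) = m2 (insert a B) - m2 B" "m2 N = u"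
      using construct_m[OF fin v2 t2] by blast
    have msum: "m S = (1/2) * m1 S + (1/2) * m2 S" if "S \<subseteq> N" for S
    proof (rule uniqueness[OF fin _ _ _ that])
      show "standardized N m" using ssm unfolding std_supermod_def by auto
      show "standardized N (\<lambda>S. (1/2) * m1 S + (1/2) * m2 S)"
        using m1(1) m2(1) unfolding std_supermod_def standardized_def by auto
      show "\<forall>(a, B)\<in>Ups N. m (insert a B) - m B =
          (1/2) * m1 (insert a B) + (1/2) * m2 (insert a B) - ((1/2) * m1 B + (1/2) * m2 B)"
      proof (intro ballI, clarify)
        fix a B assume "(a, B) \<in> Ups N"
        then have "ob (a, B) = m (insert a B) - m B" "ob1 (a, B) = m1 (insert a B) - m1 B"
          "ob2 (a, B) = m2 (insert a B) - m2 B" using diffs m1(2) m2(2) by auto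
        then show "m (insert a B) - m B =
          (1/2) * m1 (insert a B) + (1/2) * m2 (insert a B) - ((1/2) * m1 B + (1/2) * m2 B)"
          unfolding ob1_def ob2_def by (simp add: algebra_simps)
      qed
    qed
    obtain c where c: "c \<ge> 0" "\<forall>S\<subseteq>N. (1/2) * m1 S = c * m S"
      using ext ssm_scale[OF _ m1(1), of "1/2"] ssm_scale[OF _ m2(1), of "1/2"] msum
      unfolding extreme_ssm_def by (metis (no_types, lifting) divide_nonneg_pos zero_le_one zero_less_numeral)
    have "(1/2) * u = c * u" using c(2) m1(3) uN by auto
    then have c2: "c = 1/2" using upos by simp
    have "x (Some p) = 0" if p: "p \<in> Ups N" for p
    proof -
      obtain a B where ab: "p = (a, B)" by (cases p)
      have sub: "insert a B \<subseteq> N" "B \<subseteq> N" using p ab unfolding Ups_def by auto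
      have "m1 (insert a B) = m (insert a B)" "m1 B = m B" using c(2) c2 sub by auto
      moreover have "ob1 (a, B) = m1 (insert a B) - m1 B" "ob (a, B) = m (insert a B) - m B"
        using m1(2) diffs p ab by auto
      ultimately have "ob1 p = ob p" using ab by simp
      then show ?thesis using e(1) unfolding ob1_def h_def by simp
    qed
    then have "\<forall>j\<in>Dp (Ups N). x j = 0" using xN unfolding Dp_def by auto
    then show False using x(1) by blast
  qed
  have Geq: "Greatest P = d" using ge Pb[OF Pg] by simp
  have Fne: "F \<noteq> {}" using exH famF by blast
  have "affdim F = int d - 1" unfolding affdim_def using Fne Geq unfolding P_def by simp
  moreover have "affdim (famPoly N) = int d" using famPoly_affdim[OF fin] unfolding d_def .
  ultimately show ?thesis unfolding facet_defining_def using valid unfolding F_def by simp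
qed


lemma dir1:
  assumes fin: "finite N" and c2: "card N \<ge> 2" and fac: "facet_defining N ob u"
    and tight: "\<forall>H. full_graph N H \<longrightarrow> inprod N ob (eta N H) = u"
  shows "\<exists>m. extreme_ssm N m \<and> (\<forall>(a, B)\<in>Ups N. ob (a, B) = m (insert a B) - m B)"
proof -
  define F where "F = {x\<in>famPoly N. inprod N ob x = u}"
  define d where "d = card (Ups N)"
  have valid: "\<forall>x\<in>famPoly N. inprod N ob x \<le> u" and aff: "affdim F = affdim (famPoly N) - 1"
    using fac unfolding facet_defining_def F_def by auto
  have affF: "affdim F = int d - 1" using aff famPoly_affdim[OF fin] unfolding d_def by simp
  have valid_eta: "\<forall>G\<in>DAGs N. inprod N ob (eta N G) \<le> u"
    using valid eta_in_famPoly[OF fin] by blast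
  obtain m where m: "std_supermod N m" "\<forall>(a, B)\<in>Ups N. ob (a, B) = m (insert a B) - m B" "m N = u"
    using construct_m[OF fin valid_eta tight] by blast
  have fD: "finite (Ups N)" using finite_Ups[OF fin] .
  have dpos: "d > 0"
  proof -
    obtain a where a: "a \<in> N" using c2 by fastforce
    have "card (N - {a}) \<ge> 1" using c2 a fin by simp
    then have "N - {a} \<noteq> {}" by (metis card.empty not_one_le_zero)
    then obtain b where b: "b \<in> N - {a}" by blast
    have "(a, {b}) \<in> Ups N" using a b unfolding Ups_def by auto
    then show ?thesis unfolding d_def using fD card_gt_0_iff by blast
  qed
  have nz: "\<exists>S\<subseteq>N. m S \<noteq> 0"
  proof (rule ccontr)
    assume "\<not> ?thesis"
    then have z: "\<forall>S\<subseteq>N. m S = 0" by auto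
    have "ob p = 0" if "p \<in> Ups N" for p
    proof -
      obtain a B where ab: "p = (a, B)" by (cases p)
      then have "insert a B \<subseteq> N" "B \<subseteq> N" using that unfolding Ups_def by auto
      then show ?thesis using m(2) that ab z by auto
    qed
    then have "inprod N ob x = inprod N (\<lambda>_. 0) x" for x by (intro inprod_cong) auto
    then have "inprod N ob x = 0" for x unfolding inprod_def by simp
    moreover have "u = 0" using m(3) z by auto
    ultimately have "F = famPoly N" unfolding F_def by auto
    then show False using aff by simp
  qed
  have upos: "u > 0" using mN_pos[OF fin m(1) nz] m(3) by simp
  have Fne: "F \<noteq> {}"
  proof
    assume "F = {}"
    then have "affdim F = -1" unfolding affdim_def by simp
    then show False using affF dpos by simp
  qed
  define P where "P = (\<lambda>k. \<exists>T. T \<subseteq> F \<and> aff_indep T \<and> card T = k)"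
  have P0: "P 0" unfolding P_def using aff_indep_empty by auto
  have Pb: "k \<le> d" if "P k" for k
    using that face_bound[OF fin _ _, of u _ ob] upos unfolding P_def F_def d_def by auto
  have Pg: "P (Greatest P)" using GreatestI_nat[of P 0 d, OF P0 Pb] .
  have "affdim F = int (Greatest P) - 1" unfolding affdim_def P_def using Fne by simp
  then have Geq: "Greatest P = d" using affF by simp
  obtain T where T: "T \<subseteq> F" "aff_indep T" "card T = d" using Pg Geq unfolding P_def by auto
  have fT: "finite T" using T(2) unfolding aff_indep_def by auto
  have tT: "\<forall>t\<in>T. inprod N ob t = u" using T(1) unfolding F_def by auto
  define Q where "Q = insert (\<lambda>_. 0) T"
  have Qi: "aff_indep Q" "(\<lambda>_. 0) \<notin> T" using ins0[OF T(2) tT _ fin] upos unfolding Q_def by auto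
  have cQ: "card Q = d + 1" unfolding Q_def using Qi(2) fT T(3) by simp
  have Qs: "\<forall>t\<in>Q. \<forall>p. p \<notin> Ups N \<longrightarrow> t p = 0"
  proof (intro ballI allI impI)
    fix t p assume "t \<in> Q" "p \<notin> Ups N"
    then show "t p = 0" using T(1) famPoly_zero[of t N p] unfolding Q_def F_def by auto
  qed
  have "extreme_ssm N m" unfolding extreme_ssm_def
  proof (intro conjI nz m(1) allI impI)
    fix m1 m2 assume h: "std_supermod N m1 \<and> std_supermod N m2 \<and> (\<forall>S\<subseteq>N. m S = m1 S + m2 S)"
    define ob1 where "ob1 p = m1 (insert (fst p) (snd p)) - m1 (snd p)" for p :: "'a \<times> 'a set"
    define ob2 where "ob2 p = m2 (insert (fst p) (snd p)) - m2 (snd p)" for p :: "'a \<times> 'a set"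
    have d1: "\<forall>(a, B)\<in>Ups N. ob1 (a, B) = m1 (insert a B) - m1 B" unfolding ob1_def by auto
    have d2: "\<forall>(a, B)\<in>Ups N. ob2 (a, B) = m2 (insert a B) - m2 B" unfolding ob2_def by auto
    have v1: "inprod N ob1 x \<le> m1 N" if "x \<in> famPoly N" for x
      using valid_etas[OF fin _ that] validity[OF fin _ d1] h by blast
    have v2: "inprod N ob2 x \<le> m2 N" if "x \<in> famPoly N" for x
      using valid_etas[OF fin _ that] validity[OF fin _ d2] h by blast
    have osum: "ob p = ob1 p + ob2 p" if "p \<in> Ups N" for p
    proof -
      obtain a B where ab: "p = (a, B)" by (cases p)
      then have "insert a B \<subseteq> N" "B \<subseteq> N" using that unfolding Ups_def by auto
      then show ?thesis using m(2) that ab h unfolding ob1_def ob2_def by auto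
    qed
    have isum: "inprod N ob y = inprod N ob1 y + inprod N ob2 y" for y
      using inprod_cong[of N ob "\<lambda>p. ob1 p + ob2 p", OF osum] inprod_add by metis
    have usum: "u = m1 N + m2 N" using h m(3) by auto
    have t1: "inprod N ob1 t = m1 N" if "t \<in> T" for t
    proof -
      have "t \<in> famPoly N" using that T(1) unfolding F_def by auto
      then show ?thesis using v1 v2 isum[of t] usum tT that by fastforce
    qed
    define lam where "lam = m1 N / u"
    define z where "z j = (case j of None \<Rightarrow> 0 | Some p \<Rightarrow> ob1 p - lam * ob p)" for j
    have zq: "(\<Sum>j\<in>Dp (Ups N). z j * lift q j) = 0" if "q \<in> Q" for q
    proof -
      have "(\<Sum>j\<in>Dp (Ups N). z j * lift q j) = inprod N ob1 q - lam * inprod N ob q"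
        unfolding lift_sum[OF fD] z_def inprod_def
        by (simp add: sum_subtractf sum_distrib_left algebra_simps)
      moreover have "inprod N ob1 q - lam * inprod N ob q = 0"
      proof (cases "q \<in> T")
        case True
        then show ?thesis using t1 tT upos unfolding lam_def by simp
      next
        case False
        then have "q = (\<lambda>_. 0)" using that unfolding Q_def by auto
        then show ?thesis by simp
      qed
      ultimately show ?thesis by simp
    qed
    have z0: "\<forall>j\<in>Dp (Ups N). z j = 0"
    proof (rule span_lemma[OF Qi(1) fD Qs])
      show "card Q = card (Ups N) + 1" using cQ unfolding d_def .
      show "\<forall>q\<in>Q. (\<Sum>j\<in>Dp (Ups N). z j * lift q j) = 0" using zq by blast
    qed
    have ol: "ob1 p = lam * ob p" if "p \<in> Ups N" for p
      using z0 that unfolding Dp_def z_def by force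
    have eq: "m1 S = lam * m S" if "S \<subseteq> N" for S
    proof (rule uniqueness[OF fin _ _ _ that])
      show "standardized N m1" using h unfolding std_supermod_def by auto
      show "standardized N (\<lambda>S. lam * m S)" using m(1) unfolding std_supermod_def standardized_def by auto
      show "\<forall>(a, B)\<in>Ups N. m1 (insert a B) - m1 B = lam * m (insert a B) - lam * m B"
      proof (intro ballI, clarify)
        fix a B assume ab: "(a, B) \<in> Ups N"
        have "m1 (insert a B) - m1 B = ob1 (a, B)" using d1 ab by auto
        also have "\<dots> = lam * ob (a, B)" using ol ab by auto
        also have "\<dots> = lam * m (insert a B) - lam * m B"
        proof -
          have "ob (a, B) = m (insert a B) - m B" using m(2) ab by auto
          then show ?thesis by (simp add: right_diff_distrib)
        qed
        finally show "m1 (insert a B) - m1 B = lam * m (insert a B) - lam * m B" .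
      qed
    qed
    have "lam \<ge> 0" unfolding lam_def using ssm_nonneg[OF fin _ order_refl, of m1] h upos by simp
    then show "\<exists>c\<ge>0. \<forall>S\<subseteq>N. m1 S = c * m S" using eq by blast
  qed
  then show ?thesis using m(2) by blast
qed

theorem theorem2:
  fixes N :: "'a set" and ob :: "'a \<times> 'a set \<Rightarrow> real" and u :: real
  assumes "finite N" and "card N \<ge> 2"
  shows "(facet_defining N ob u \<and> (\<forall>H. full_graph N H \<longrightarrow> inprod N ob (eta N H) = u))
     \<longleftrightarrow> (\<exists>m. extreme_ssm N m \<and>
            (\<forall>(a, B)\<in>Ups N. ob (a, B) = m (insert a B) - m B) \<and>
            (\<forall>H. full_graph N H \<longrightarrow> inprod N ob (eta N H) = u))"
  using dir1[OF assms] dir2[OF assms(1)] by blast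


end
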